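(* The average variance of the entries of $\mathcal P(\tilde X_R)$, namely $\frac1{N^2}\sum_{k_1,k_2}\operatorname{var}\big(\mathcal P(\tilde X_R)[k_1,k_2]\big)$, is $O(M^2/N^2)$.
   Context: $M,N$ positive integers with $N>2M$; $g$ is a real $M\times M$ image with values in $[0,255]$ zero-padded to $N\times N$, $\tilde g=\tilde g_R+j\tilde g_I$ its $N\times N$ 2D-DFT $\mathfrak F(g)$, and $\tilde X_R=\mathbb 1(\tilde g_R+W_R+d_R>0)-\tfrac12$ entrywise, where $W_R$ has independent entries of zero-mean noise of known distribution symmetric about $0$ and $d_R$ is independent AWGN dither. $\mathcal P(\tilde h)=\mathfrak F(\textsc{Clip}(\textsc{Proj}(\mathfrak F^{-1}(\tilde h))))$, where $\textsc{Proj}$ zeroes spatial-domain pixels outside the support region (the $2M^2$ pixels of the image block and its reflection $(n_1,n_2)\mapsto(-n_1\bmod N,-n_2\bmod N)$) and $\textsc{Clip}$ clips entries to $[0,255]$. *)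

theory Defs
  imports "HOL-Probability.Probability"
begin

definition dft2 :: "nat \<Rightarrow> (nat \<Rightarrow> nat \<Rightarrow> complex) \<Rightarrow> nat \<Rightarrow> nat \<Rightarrow> complex" where
  "dft2 N h k1 k2 = (1 / of_nat N) *
     (\<Sum>n1<N. \<Sum>n2<N. h n1 n2 *
        cis (- 2 * pi * (real k1 * real n1 + real k2 * real n2) / real N))"

definition idft2 :: "nat \<Rightarrow> (nat \<Rightarrow> nat \<Rightarrow> complex) \<Rightarrow> nat \<Rightarrow> nat \<Rightarrow> complex" where
  "idft2 N h n1 n2 = (1 / of_nat N) *
     (\<Sum>k1<N. \<Sum>k2<N. h k1 k2 *
        cis (2 * pi * (real k1 * real n1 + real k2 * real n2) / real N))"

definition support_region :: "nat \<Rightarrow> nat \<Rightarrow> (nat \<times> nat) set" where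
  "support_region N M =
     {(n1, n2). n1 < M \<and> n2 < M} \<union>
     {((N - n1) mod N, (N - n2) mod N) | n1 n2. n1 < M \<and> n2 < M}"

definition proj_supp :: "nat \<Rightarrow> nat \<Rightarrow> (nat \<Rightarrow> nat \<Rightarrow> complex) \<Rightarrow> nat \<Rightarrow> nat \<Rightarrow> complex" where
  "proj_supp N M h n1 n2 = (if (n1, n2) \<in> support_region N M then h n1 n2 else 0)"

definition clip :: "(nat \<Rightarrow> nat \<Rightarrow> complex) \<Rightarrow> nat \<Rightarrow> nat \<Rightarrow> complex" where
  "clip h n1 n2 = complex_of_real (max 0 (min 255 (Re (h n1 n2))))"

definition Pop :: "nat \<Rightarrow> nat \<Rightarrow> (nat \<Rightarrow> nat \<Rightarrow> complex) \<Rightarrow> nat \<Rightarrow> nat \<Rightarrow> complex" where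
  "Pop N M h = dft2 N (clip (proj_supp N M (idft2 N h)))"

definition zero_pad :: "nat \<Rightarrow> (nat \<Rightarrow> nat \<Rightarrow> real) \<Rightarrow> nat \<Rightarrow> nat \<Rightarrow> complex" where
  "zero_pad M g n1 n2 = (if n1 < M \<and> n2 < M then complex_of_real (g n1 n2) else 0)"

text \<open>One-bit measurement of the real part of the DFT with noise W and dither d.\<close>
definition XR :: "nat \<Rightarrow> nat \<Rightarrow> (nat \<Rightarrow> nat \<Rightarrow> real) \<Rightarrow> (nat \<Rightarrow> nat \<Rightarrow> 'w \<Rightarrow> real)
                 \<Rightarrow> (nat \<Rightarrow> nat \<Rightarrow> 'w \<Rightarrow> real) \<Rightarrow> 'w \<Rightarrow> nat \<Rightarrow> nat \<Rightarrow> complex" where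
  "XR N M g W d \<omega> k1 k2 =
     complex_of_real ((if Re (dft2 N (zero_pad M g) k1 k2) + W k1 k2 \<omega> + d k1 k2 \<omega> > 0
                       then 1 else 0) - 1/2)"

definition cvariance :: "'w measure \<Rightarrow> ('w \<Rightarrow> complex) \<Rightarrow> real" where
  "cvariance P Z = prob_space.expectation P (\<lambda>\<omega>. (cmod (Z \<omega> - prob_space.expectation P Z))\<^sup>2)"

end

theory Submission
  imports Defs
begin

lemma cvar_le:
  fixes Z :: "'w \<Rightarrow> complex"
  assumes P: "prob_space P" and Zm: "Z \<in> borel_measurable P" and B: "\<And>\<omega>. cmod (Z \<omega>) \<le> B"
  shows "cvariance P Z \<le> prob_space.expectation P (\<lambda>\<omega>. (cmod (Z \<omega>))\<^sup>2)"
proof -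
  interpret prob_space P by (rule P)
  have iZ: "integrable P Z"
    by (rule integrable_const_bound[where B=B]) (use Zm B in auto)
  have mR: "(\<lambda>\<omega>. Re (Z \<omega>)) \<in> borel_measurable P" and mI: "(\<lambda>\<omega>. Im (Z \<omega>)) \<in> borel_measurable P"
    using Zm by auto
  have bR: "\<bar>Re (Z \<omega>)\<bar> \<le> B" for \<omega> using B[of \<omega>] abs_Re_le_cmod order_trans by blast
  have bI: "\<bar>Im (Z \<omega>)\<bar> \<le> B" for \<omega> using B[of \<omega>] abs_Im_le_cmod order_trans by blast
  have iR: "integrable P (\<lambda>\<omega>. Re (Z \<omega>))"
    by (rule integrable_const_bound[where B=B]) (use mR bR in auto)
  have iI: "integrable P (\<lambda>\<omega>. Im (Z \<omega>))"
    by (rule integrable_const_bound[where B=B]) (use mI bI in auto)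
  have B0: "0 \<le> B" using B[of undefined] norm_ge_zero order_trans by blast
  have sR: "(Re (Z \<omega>))\<^sup>2 \<le> B\<^sup>2" for \<omega> by (metis abs_le_square_iff abs_of_nonneg B0 bR)
  have sI: "(Im (Z \<omega>))\<^sup>2 \<le> B\<^sup>2" for \<omega> by (metis abs_le_square_iff abs_of_nonneg B0 bI)
  have iR2: "integrable P (\<lambda>\<omega>. (Re (Z \<omega>))\<^sup>2)"
    by (rule integrable_const_bound[where B="B^2"]) (use mR sR in auto)
  have iI2: "integrable P (\<lambda>\<omega>. (Im (Z \<omega>))\<^sup>2)"
    by (rule integrable_const_bound[where B="B^2"]) (use mI sI in auto)
  define c where "c = expectation Z"
  have cR: "Re c = expectation (\<lambda>\<omega>. Re (Z \<omega>))" using integral_Re[OF iZ] c_def by simp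
  have cI: "Im c = expectation (\<lambda>\<omega>. Im (Z \<omega>))" using integral_Im[OF iZ] c_def by simp
  have "cvariance P Z = expectation (\<lambda>\<omega>. (Re (Z \<omega>) - Re c)\<^sup>2 + (Im (Z \<omega>) - Im c)\<^sup>2)"
    unfolding cvariance_def c_def[symmetric] by (simp add: cmod_power2)
  also have "\<dots> = expectation (\<lambda>\<omega>. (Re (Z \<omega>) - Re c)\<^sup>2) + expectation (\<lambda>\<omega>. (Im (Z \<omega>) - Im c)\<^sup>2)"
    apply (rule Bochner_Integration.integral_add)
    unfolding power2_diff using iR iR2 iI iI2 by auto
  also have "\<dots> = (expectation (\<lambda>\<omega>. (Re (Z \<omega>))\<^sup>2) - (Re c)\<^sup>2) + (expectation (\<lambda>\<omega>. (Im (Z \<omega>))\<^sup>2) - (Im c)\<^sup>2)"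
    unfolding cR cI using variance_eq[OF iR iR2] variance_eq[OF iI iI2] by simp
  also have "\<dots> \<le> expectation (\<lambda>\<omega>. (Re (Z \<omega>))\<^sup>2) + expectation (\<lambda>\<omega>. (Im (Z \<omega>))\<^sup>2)" by simp
  also have "\<dots> = expectation (\<lambda>\<omega>. (cmod (Z \<omega>))\<^sup>2)"
    by (subst Bochner_Integration.integral_add[symmetric]) (use iR2 iI2 in \<open>auto simp: cmod_power2\<close>)
  finally show ?thesis .
qed

lemma roots_sum:
  fixes j :: int and N :: nat
  assumes "0 < N"
  shows "(\<Sum>k<N. cis (2 * pi * real k * real_of_int j / real N)) = (if j mod int N = 0 then of_nat N else 0)"
proof -
  define z where "z = cis (2 * pi * real_of_int j / real N)"
  have zk: "cis (2 * pi * real k * real_of_int j / real N) = z ^ k" for k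
    by (simp add: z_def Complex.DeMoivre field_simps)
  have c1: "cis (pi * (real_of_int i * 2)) = 1" for i :: int
    using cis_multiple_2pi[of "real_of_int i"] by (simp add: mult_ac)
  have zN: "z ^ N = 1"
    using assms by (simp add: z_def Complex.DeMoivre field_simps c1)
  show ?thesis
  proof (cases "j mod int N = 0")
    case True
    then obtain q where "j = int N * q" by auto
    then have "z = 1" unfolding z_def using assms
      by (simp add: field_simps c1)
    then show ?thesis using True zk by simp
  next
    case False
    have "z \<noteq> 1"
    proof
      assume "z = 1"
      then have "cos (2 * pi * real_of_int j / real N) = 1" unfolding z_def by (simp add: complex_eq_iff)
      then obtain n :: int where n: "2 * pi * real_of_int j / real N = of_int n * 2 * pi"
        by (subst (asm) cos_one_2pi_int) blast
      then have "real_of_int j = of_int n * real N" using assms by (simp add: field_simps)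
      then have "j = n * int N" by (metis of_int_eq_iff of_int_mult of_int_of_nat_eq)
      then show False using False by simp
    qed
    then have "(\<Sum>k<N. z ^ k) = 0" using zN by (simp add: sum_gp_strict)
    then show ?thesis using False zk by simp
  qed
qed

definition D1 :: "nat \<Rightarrow> (nat \<Rightarrow> complex) \<Rightarrow> nat \<Rightarrow> complex" where
  "D1 N f k = (1 / of_real (sqrt (real N))) * (\<Sum>n<N. f n * cis (- 2 * pi * (real k * real n) / real N))"

lemma roots_sum_nat:
  assumes "0 < N" "n < N" "m < N"
  shows "(\<Sum>k<N. cis (2 * pi * real k * real_of_int (int m - int n) / real N)) = (if m = n then of_nat N else 0)"
proof -
  have eq: "(int m - int n) mod int N = 0 \<longleftrightarrow> m = n"
  proof
    assume "(int m - int n) mod int N = 0"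
    then obtain q where q: "int m - int n = int N * q" by auto
    have "\<bar>int m - int n\<bar> < int N" using assms by auto
    then have "q = 0" using q assms by (cases "q = 0") (auto simp: abs_mult)
    then show "m = n" using q by simp
  qed simp
  show ?thesis by (simp only: roots_sum[OF assms(1)] eq)
qed

lemma swap3:
  "(\<Sum>k\<in>A. \<Sum>n\<in>B. \<Sum>m\<in>C. F k n m) = (\<Sum>n\<in>B. \<Sum>m\<in>C. \<Sum>k\<in>A. F k n m)"
  by (rule trans[OF sum.swap]) (rule sum.cong[OF refl], rule sum.swap)

lemma parseval1:
  assumes N: "0 < N"
  shows "(\<Sum>k<N. (cmod (D1 N f k))\<^sup>2) = (\<Sum>n<N. (cmod (f n))\<^sup>2)"
proof -
  have "complex_of_real (\<Sum>k<N. (cmod (D1 N f k))\<^sup>2) = (\<Sum>k<N. D1 N f k * cnj (D1 N f k))"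
    by (simp only: of_real_sum complex_norm_square)
  also have "\<dots> = (\<Sum>k<N. (1 / of_nat N) * (\<Sum>n<N. \<Sum>m<N. f n * cnj (f m) *
        cis (2 * pi * real k * real_of_int (int m - int n) / real N)))"
  proof (rule sum.cong[OF refl])
    fix k assume "k \<in> {..<N}"
    have e: "cis (- 2 * pi * (real k * real n) / real N) * cnj (cis (- 2 * pi * (real k * real m) / real N))
        = cis (2 * pi * real k * real_of_int (int m - int n) / real N)" for n m
      apply (simp add: cis_cnj cis_mult)
      apply (rule arg_cong[where f=cis])
      using N apply (simp add: field_simps)
      done
    have s: "complex_of_real (sqrt (real N)) * complex_of_real (sqrt (real N)) = of_nat N"
      by (simp only: of_real_mult[symmetric] real_sqrt_mult_self abs_of_nat of_real_of_nat_eq)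
    have "D1 N f k * cnj (D1 N f k) = (1 / (of_real (sqrt (real N)) * of_real (sqrt (real N)))) *
       ((\<Sum>n<N. f n * cis (- 2 * pi * (real k * real n) / real N)) *
        (\<Sum>m<N. cnj (f m) * cnj (cis (- 2 * pi * (real k * real m) / real N))))"
      by (simp add: D1_def)
    also have "\<dots> = (1 / of_nat N) * (\<Sum>n<N. \<Sum>m<N. f n * cnj (f m) *
        (cis (- 2 * pi * (real k * real n) / real N) * cnj (cis (- 2 * pi * (real k * real m) / real N))))"
      unfolding s sum_product by (simp add: mult_ac)
    finally show "D1 N f k * cnj (D1 N f k) = (1 / of_nat N) * (\<Sum>n<N. \<Sum>m<N. f n * cnj (f m) *
        cis (2 * pi * real k * real_of_int (int m - int n) / real N))" unfolding e .
  qed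
  also have "\<dots> = (1 / of_nat N) * (\<Sum>n<N. \<Sum>m<N. f n * cnj (f m) *
        (\<Sum>k<N. cis (2 * pi * real k * real_of_int (int m - int n) / real N)))"
    by (subst sum_distrib_left[symmetric], subst swap3, simp only: sum_distrib_left)
  also have "\<dots> = (1 / of_nat N) * (\<Sum>n<N. \<Sum>m<N. f n * cnj (f m) * (if m = n then of_nat N else 0))"
    using roots_sum_nat[OF N] by (intro arg_cong2[where f="(*)"] refl sum.cong) auto
  also have "\<dots> = (\<Sum>n<N. f n * cnj (f n))"
    using N by (simp add: sum_distrib_left if_distrib sum.delta cong: if_cong)
  also have "\<dots> = complex_of_real (\<Sum>n<N. (cmod (f n))\<^sup>2)"
    by (simp only: of_real_sum complex_norm_square)
  finally show ?thesis by (simp only: of_real_eq_iff)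
qed

lemma dft2_D1:
  "dft2 N h k1 k2 = D1 N (\<lambda>n1. D1 N (\<lambda>n2. h n1 n2) k2) k1"
proof -
  have s: "complex_of_real (sqrt (real N)) * complex_of_real (sqrt (real N)) = of_nat N"
    by (simp only: of_real_mult[symmetric] real_sqrt_mult_self abs_of_nat of_real_of_nat_eq)
  have c: "cis (- 2 * pi * (real k2 * real n2) / real N) * cis (- 2 * pi * (real k1 * real n1) / real N)
      = cis (- 2 * pi * (real k1 * real n1 + real k2 * real n2) / real N)" for n1 n2
    apply (simp add: cis_mult)
    apply (rule arg_cong[where f=cis])
    apply (cases "N = 0")
     apply (simp_all add: field_simps)
    done
  have "D1 N (\<lambda>n1. D1 N (\<lambda>n2. h n1 n2) k2) k1 =
     (1 / (complex_of_real (sqrt (real N)) * complex_of_real (sqrt (real N)))) *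
     (\<Sum>n1<N. \<Sum>n2<N. h n1 n2 * (cis (- 2 * pi * (real k2 * real n2) / real N) * cis (- 2 * pi * (real k1 * real n1) / real N)))"
    unfolding D1_def by (simp add: sum_distrib_left sum_distrib_right mult_ac)
  also have "\<dots> = dft2 N h k1 k2" unfolding s c dft2_def by simp
  finally show ?thesis by simp
qed

lemma parseval2:
  assumes N: "0 < N"
  shows "(\<Sum>k1<N. \<Sum>k2<N. (cmod (dft2 N h k1 k2))\<^sup>2) = (\<Sum>n1<N. \<Sum>n2<N. (cmod (h n1 n2))\<^sup>2)"
proof -
  have "(\<Sum>k1<N. \<Sum>k2<N. (cmod (dft2 N h k1 k2))\<^sup>2)
      = (\<Sum>k2<N. \<Sum>k1<N. (cmod (D1 N (\<lambda>n1. D1 N (\<lambda>n2. h n1 n2) k2) k1))\<^sup>2)"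
    unfolding dft2_D1 by (rule sum.swap)
  also have "\<dots> = (\<Sum>k2<N. \<Sum>n1<N. (cmod (D1 N (\<lambda>n2. h n1 n2) k2))\<^sup>2)"
    by (rule sum.cong[OF refl], rule parseval1[OF N])
  also have "\<dots> = (\<Sum>n1<N. \<Sum>k2<N. (cmod (D1 N (\<lambda>n2. h n1 n2) k2))\<^sup>2)"
    by (rule sum.swap)
  also have "\<dots> = (\<Sum>n1<N. \<Sum>n2<N. (cmod (h n1 n2))\<^sup>2)"
    by (rule sum.cong[OF refl], rule parseval1[OF N])
  finally show ?thesis .
qed


lemma support_eq:
  "support_region N M = ({..<M} \<times> {..<M}) \<union> (\<lambda>(n1, n2). ((N - n1) mod N, (N - n2) mod N)) ` ({..<M} \<times> {..<M})"
  unfolding support_region_def by auto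

lemma support_card: "finite (support_region N M) \<and> card (support_region N M) \<le> 2 * M^2"
proof -
  let ?A = "{..<M} \<times> {..<M}"
  let ?f = "\<lambda>(n1::nat, n2::nat). ((N - n1) mod N, (N - n2) mod N)"
  have "card (?A \<union> ?f ` ?A) \<le> card ?A + card (?f ` ?A)" by (rule card_Un_le)
  also have "\<dots> \<le> card ?A + card ?A" using card_image_le[of ?A ?f] by simp
  finally have "card (?A \<union> ?f ` ?A) \<le> 2 * M^2" by (simp add: card_cartesian_product power2_eq_square)
  then show ?thesis unfolding support_eq by simp
qed

lemma clip_bound: "cmod (clip h n1 n2) \<le> 255"
  unfolding clip_def by simp

lemma clip_proj_zero: "(n1, n2) \<notin> support_region N M \<Longrightarrow> clip (proj_supp N M h) n1 n2 = 0"
  unfolding clip_def proj_supp_def by simp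

lemma sumsq_bound:
  "(\<Sum>n1<N. \<Sum>n2<N. (cmod (clip (proj_supp N M h) n1 n2))\<^sup>2) \<le> 255\<^sup>2 * (2 * real M ^ 2)"
proof -
  define S where "S = support_region N M"
  define F where "F p = (cmod (clip (proj_supp N M h) (fst p) (snd p)))\<^sup>2" for p
  have fS: "finite S" and cS: "card S \<le> 2 * M^2" using support_card S_def by auto
  have "(\<Sum>n1<N. \<Sum>n2<N. (cmod (clip (proj_supp N M h) n1 n2))\<^sup>2) = (\<Sum>p\<in>{..<N} \<times> {..<N}. F p)"
    unfolding F_def by (simp add: sum.cartesian_product case_prod_beta)
  also have "\<dots> = (\<Sum>p\<in>({..<N} \<times> {..<N}) \<inter> S. F p)"
    by (rule sum.mono_neutral_right) (auto simp: F_def S_def clip_proj_zero)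
  also have "\<dots> \<le> (\<Sum>p\<in>S. F p)"
    by (rule sum_mono2[OF fS]) (auto simp: F_def)
  also have "\<dots> \<le> (\<Sum>p\<in>S. 255\<^sup>2)"
  proof (rule sum_mono)
    fix p assume "p \<in> S"
    have "cmod (clip (proj_supp N M h) (fst p) (snd p)) \<le> 255" by (rule clip_bound)
    then show "F p \<le> 255\<^sup>2" unfolding F_def by (intro power_mono) auto
  qed
  also have "\<dots> = 255\<^sup>2 * real (card S)" by simp
  also have "\<dots> \<le> 255\<^sup>2 * (2 * real M ^ 2)"
  proof -
    have "real (card S) \<le> real (2 * M^2)" using cS by (simp only: of_nat_le_iff)
    then show ?thesis by simp
  qed
  finally show ?thesis .
qed

lemma dft2_bound:
  assumes "\<And>n1 n2. cmod (h n1 n2) \<le> B"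
  shows "cmod (dft2 N h k1 k2) \<le> real N * B"
proof (cases "N = 0")
  case True then show ?thesis by (simp add: dft2_def)
next
  case False
  have "cmod (\<Sum>n1<N. \<Sum>n2<N. h n1 n2 * cis (- 2 * pi * (real k1 * real n1 + real k2 * real n2) / real N))
       \<le> (\<Sum>n1<N. \<Sum>n2<N. cmod (h n1 n2 * cis (- 2 * pi * (real k1 * real n1 + real k2 * real n2) / real N)))"
    by (rule order_trans[OF norm_sum], rule sum_mono, rule norm_sum)
  also have "\<dots> \<le> (\<Sum>n1<N. \<Sum>n2<N. B)"
    by (intro sum_mono) (simp add: norm_mult assms)
  also have "\<dots> = real N * real N * B" by simp
  finally have *: "cmod (\<Sum>n1<N. \<Sum>n2<N. h n1 n2 * cis (- 2 * pi * (real k1 * real n1 + real k2 * real n2) / real N))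
       \<le> real N * real N * B" .
  have "cmod (dft2 N h k1 k2) = (1 / real N) * cmod (\<Sum>n1<N. \<Sum>n2<N. h n1 n2 * cis (- 2 * pi * (real k1 * real n1 + real k2 * real n2) / real N))"
    unfolding dft2_def by (simp add: norm_mult norm_divide)
  also have "\<dots> \<le> (1 / real N) * (real N * real N * B)"
    by (rule mult_left_mono[OF *]) simp
  also have "\<dots> = real N * B" using False by simp
  finally show ?thesis .
qed

lemma meas_dft2:
  assumes "\<And>n1 n2. n1 < N \<Longrightarrow> n2 < N \<Longrightarrow> (\<lambda>\<omega>. h \<omega> n1 n2) \<in> borel_measurable P"
  shows "(\<lambda>\<omega>. dft2 N (h \<omega>) k1 k2) \<in> borel_measurable P"
  unfolding dft2_def
  by (intro borel_measurable_times borel_measurable_const borel_measurable_sum) (auto intro: assms)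

lemma meas_idft2:
  assumes "\<And>n1 n2. n1 < N \<Longrightarrow> n2 < N \<Longrightarrow> (\<lambda>\<omega>. h \<omega> n1 n2) \<in> borel_measurable P"
  shows "(\<lambda>\<omega>. idft2 N (h \<omega>) k1 k2) \<in> borel_measurable P"
  unfolding idft2_def
  by (intro borel_measurable_times borel_measurable_const borel_measurable_sum) (auto intro: assms)

lemma meas_clip_proj:
  assumes "(\<lambda>\<omega>. h \<omega> n1 n2) \<in> borel_measurable P"
  shows "(\<lambda>\<omega>. clip (proj_supp N M (h \<omega>)) n1 n2) \<in> borel_measurable P"
  unfolding clip_def proj_supp_def using assms by (cases "(n1, n2) \<in> support_region N M") auto

lemma meas_XR:
  assumes "W k1 k2 \<in> borel_measurable P" "d k1 k2 \<in> borel_measurable P"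
  shows "(\<lambda>\<omega>. XR N M g W d \<omega> k1 k2) \<in> borel_measurable P"
  unfolding XR_def using assms by measurable

theorem lemma4:
  "\<exists>C::real. \<forall>(P::'w measure) (M::nat) (N::nat) (g::nat \<Rightarrow> nat \<Rightarrow> real)
       (W::nat \<Rightarrow> nat \<Rightarrow> 'w \<Rightarrow> real) (d::nat \<Rightarrow> nat \<Rightarrow> 'w \<Rightarrow> real) (\<sigma>::real).
     prob_space P \<and> 0 < M \<and> 2 * M < N
     \<and> (\<forall>i j. i < M \<and> j < M \<longrightarrow> 0 \<le> g i j \<and> g i j \<le> 255)
     \<and> (\<forall>k1 k2. k1 < N \<and> k2 < N \<longrightarrow>
           W k1 k2 \<in> borel_measurable P \<and> integrable P (W k1 k2)
           \<and> prob_space.expectation P (W k1 k2) = 0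
           \<and> distr P borel (W k1 k2) = distr P borel (\<lambda>\<omega>. - W k1 k2 \<omega>)
           \<and> distributed P lborel (d k1 k2) (\<lambda>x. ennreal (normal_density 0 \<sigma> x)))
     \<and> 0 < \<sigma>
     \<and> prob_space.indep_vars P (\<lambda>_. borel)
          (\<lambda>i. case i of Inl (k1, k2) \<Rightarrow> W k1 k2 | Inr (k1, k2) \<Rightarrow> d k1 k2)
          (({0..<N} \<times> {0..<N}) <+> ({0..<N} \<times> {0..<N}))
     \<longrightarrow> (1 / (real N)\<^sup>2) *
           (\<Sum>k1<N. \<Sum>k2<N. cvariance P (\<lambda>\<omega>. Pop N M (XR N M g W d \<omega>) k1 k2))
         \<le> C * (real M)\<^sup>2 / (real N)\<^sup>2"
  proof (rule exI[where x = "2 * 255^2"], intro allI impI, elim conjE)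
  fix P :: "'w measure" and M N :: nat and g :: "nat \<Rightarrow> nat \<Rightarrow> real"
    and W d :: "nat \<Rightarrow> nat \<Rightarrow> 'w \<Rightarrow> real" and \<sigma> :: real
  assume P: "prob_space P" and MN: "2 * M < N"
    and WD: "\<forall>k1 k2. k1 < N \<and> k2 < N \<longrightarrow>
           W k1 k2 \<in> borel_measurable P \<and> integrable P (W k1 k2)
           \<and> prob_space.expectation P (W k1 k2) = 0
           \<and> distr P borel (W k1 k2) = distr P borel (\<lambda>\<omega>. - W k1 k2 \<omega>)
           \<and> distributed P lborel (d k1 k2) (\<lambda>x. ennreal (normal_density 0 \<sigma> x))"
  interpret prob_space P by (rule P)
  have N: "0 < N" using MN by auto
  define H where "H \<omega> = clip (proj_supp N M (idft2 N (XR N M g W d \<omega>)))" for \<omega>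
  have PopH: "Pop N M (XR N M g W d \<omega>) k1 k2 = dft2 N (H \<omega>) k1 k2" for \<omega> k1 k2
    by (simp add: Pop_def H_def)
  have mX: "(\<lambda>\<omega>. XR N M g W d \<omega> k1 k2) \<in> borel_measurable P" if "k1 < N" "k2 < N" for k1 k2
  proof -
    have "W k1 k2 \<in> borel_measurable P" using WD that by blast
    moreover have "d k1 k2 \<in> measurable P lborel"
      using WD that distributed_measurable by blast
    then have "d k1 k2 \<in> borel_measurable P" by simp
    ultimately show ?thesis by (rule meas_XR)
  qed
  have mH: "(\<lambda>\<omega>. H \<omega> n1 n2) \<in> borel_measurable P" for n1 n2
    unfolding H_def by (intro meas_clip_proj meas_idft2 mX)
  have mZ: "(\<lambda>\<omega>. dft2 N (H \<omega>) k1 k2) \<in> borel_measurable P" for k1 k2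
    by (intro meas_dft2 mH)
  have bZ: "cmod (dft2 N (H \<omega>) k1 k2) \<le> real N * 255" for \<omega> k1 k2
    by (rule dft2_bound) (simp add: H_def clip_bound)
  have sq: "(\<Sum>k1<N. \<Sum>k2<N. (cmod (dft2 N (H \<omega>) k1 k2))\<^sup>2) \<le> 255\<^sup>2 * (2 * real M ^ 2)" for \<omega>
    unfolding parseval2[OF N] H_def by (rule sumsq_bound)
  have iZ2: "integrable P (\<lambda>\<omega>. (cmod (dft2 N (H \<omega>) k1 k2))\<^sup>2)" for k1 k2
  proof (rule integrable_const_bound[where B = "(real N * 255)^2"])
    show "AE x in P. norm ((cmod (dft2 N (H x) k1 k2))\<^sup>2) \<le> (real N * 255)\<^sup>2"
    proof (rule AE_I2)
      fix x
      have "(cmod (dft2 N (H x) k1 k2))\<^sup>2 \<le> (real N * 255)\<^sup>2"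
        by (rule power_mono[OF bZ]) simp
      then show "norm ((cmod (dft2 N (H x) k1 k2))\<^sup>2) \<le> (real N * 255)\<^sup>2" by simp
    qed
    show "(\<lambda>\<omega>. (cmod (dft2 N (H \<omega>) k1 k2))\<^sup>2) \<in> borel_measurable P"
      using mZ by measurable
  qed
  have "(\<Sum>k1<N. \<Sum>k2<N. cvariance P (\<lambda>\<omega>. Pop N M (XR N M g W d \<omega>) k1 k2))
      \<le> (\<Sum>k1<N. \<Sum>k2<N. expectation (\<lambda>\<omega>. (cmod (dft2 N (H \<omega>) k1 k2))\<^sup>2))"
    unfolding PopH by (intro sum_mono cvar_le[OF P mZ bZ])
  also have "\<dots> = expectation (\<lambda>\<omega>. \<Sum>k1<N. \<Sum>k2<N. (cmod (dft2 N (H \<omega>) k1 k2))\<^sup>2)"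
  proof -
    have inner: "expectation (\<lambda>\<omega>. \<Sum>k2<N. (cmod (dft2 N (H \<omega>) k1 k2))\<^sup>2)
        = (\<Sum>k2<N. expectation (\<lambda>\<omega>. (cmod (dft2 N (H \<omega>) k1 k2))\<^sup>2))" for k1
      by (rule Bochner_Integration.integral_sum) (rule iZ2)
    have "expectation (\<lambda>\<omega>. \<Sum>k1<N. \<Sum>k2<N. (cmod (dft2 N (H \<omega>) k1 k2))\<^sup>2)
        = (\<Sum>k1<N. expectation (\<lambda>\<omega>. \<Sum>k2<N. (cmod (dft2 N (H \<omega>) k1 k2))\<^sup>2))"
      by (rule Bochner_Integration.integral_sum) (rule Bochner_Integration.integrable_sum, rule iZ2)
    then show ?thesis unfolding inner by simp
  qed
  also have "\<dots> \<le> 255\<^sup>2 * (2 * real M ^ 2)"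
    by (rule integral_le_const, rule Bochner_Integration.integrable_sum, rule Bochner_Integration.integrable_sum, rule iZ2, rule AE_I2, rule sq)
  finally have S: "(\<Sum>k1<N. \<Sum>k2<N. cvariance P (\<lambda>\<omega>. Pop N M (XR N M g W d \<omega>) k1 k2))
      \<le> 255\<^sup>2 * (2 * real M ^ 2)" .
  have "(1 / (real N)\<^sup>2) * (\<Sum>k1<N. \<Sum>k2<N. cvariance P (\<lambda>\<omega>. Pop N M (XR N M g W d \<omega>) k1 k2))
     \<le> (1 / (real N)\<^sup>2) * (255\<^sup>2 * (2 * real M ^ 2))"
    by (rule mult_left_mono[OF S]) simp
  also have "\<dots> = 2 * 255 ^ 2 * (real M)\<^sup>2 / (real N)\<^sup>2" by simp
  finally show "(1 / (real N)\<^sup>2) * (\<Sum>k1<N. \<Sum>k2<N. cvariance P (\<lambda>\<omega>. Pop N M (XR N M g W d \<omega>) k1 k2))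
     \<le> 2 * 255 ^ 2 * (real M)\<^sup>2 / (real N)\<^sup>2" .
qed

end
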